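(* In the setting of the context, consider the two families of linear inequalities $$x_t-x_{t-k}\le(\underline C+(k-m)V-\overline V)y_{t+m+1}+V\sum_{i=1}^m y_{t+i}+\overline V y_t-\underline C y_{t-k}-\sum_{s\in\mathcal S}(\underline C+(k-s)V-\overline V)(y_{t-s}-y_{t-s-1}),$$ indexed by all $k\in[1,T-1]_{\mathbb Z}$ with $\overline C-\underline C-kV>0$, $m\in[0,k-1]_{\mathbb Z}$, $\mathcal S\subseteq[0,\min\{k-1,L-m-2\}]_{\mathbb Z}$ and $t\in[k+1,T-m-1]_{\mathbb Z}$, and $$x_t-x_{t+k}\le(\underline C+(k-m)V-\overline V)y_{t-m-1}+V\sum_{i=1}^m y_{t-i}+\overline V y_t-\underline C y_{t+k}-\sum_{s\in\mathcal S}(\underline C+(k-s)V-\overline V)(y_{t+s}-y_{t+s+1}),$$ indexed by the same $k,m,\mathcal S$ and $t\in[m+2,T-k]_{\mathbb Z}$. For any given point $(\mathbf x,\mathbf y)\in\mathbb R_+^{2T}$, a most violated inequality of each family can be determined in $O(T^3)$ time if a violated inequality of that family exists.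
   Context: For integers $a,b$, $[a,b]_{\mathbb Z}=\{a,a+1,\dots,b\}$ if $a\le b$ and $\emptyset$ otherwise. Fix a positive integer $T$, a positive integer $L$ (minimum up time), and reals $\overline C,\underline C,V,\overline V$ with $\overline C>\underline C>0$, $V>0$, $\overline V+V\le\overline C$ and $\underline C<\overline V<\underline C+V$; $\mathbf x=(x_1,\dots,x_T)$, $\mathbf y=(y_1,\dots,y_T)$. For an inequality $a^\top(\mathbf x,\mathbf y)\le b$, its violation at a given point is $a^\top(\mathbf x,\mathbf y)-b$; it is violated if this is positive, and a most violated inequality of a family is one maximizing this quantity over the family. Time is measured in arithmetic operations and comparisons on the input numbers. *)

theory Defs
  imports Main "HOL.Real"
begin

section \<open>A real-RAM cost model (arithmetic operations and comparisons count 1)\<close>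

text \<open>Real values can only be obtained
from the input or by arithmetic on reals / integer-to-real conversion (no
arbitrary real constants, no floor), so real numbers are only used through
arithmetic operations and comparisons.\<close>

record state =
  ir :: "nat \<Rightarrow> int"
  rr :: "nat \<Rightarrow> real"
  im :: "int \<Rightarrow> int"
  rm :: "int \<Rightarrow> real"

datatype instr =
    IConst nat int
  | IAdd nat nat nat
  | ISub nat nat nat
  | IMul nat nat nat
  | OfInt nat nat
  | RAdd nat nat nat
  | RSub nat nat nat
  | RMul nat nat nat
  | RDiv nat nat nat
  | RLoad nat nat
  | RStore nat nat
  | ILoad nat nat
  | IStore nat nat

datatype cond =
    ILess nat nat | IEq nat nat | RLess nat nat | RLeq nat nat

datatype prog =
    Skip | Instr instr | Seq prog prog | If cond prog prog | While cond prog

fun step :: "instr \<Rightarrow> state \<Rightarrow> state" where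
  "step (IConst d c) s = s\<lparr>ir := (ir s)(d := c)\<rparr>"
| "step (IAdd d a b) s = s\<lparr>ir := (ir s)(d := ir s a + ir s b)\<rparr>"
| "step (ISub d a b) s = s\<lparr>ir := (ir s)(d := ir s a - ir s b)\<rparr>"
| "step (IMul d a b) s = s\<lparr>ir := (ir s)(d := ir s a * ir s b)\<rparr>"
| "step (OfInt d a) s = s\<lparr>rr := (rr s)(d := real_of_int (ir s a))\<rparr>"
| "step (RAdd d a b) s = s\<lparr>rr := (rr s)(d := rr s a + rr s b)\<rparr>"
| "step (RSub d a b) s = s\<lparr>rr := (rr s)(d := rr s a - rr s b)\<rparr>"
| "step (RMul d a b) s = s\<lparr>rr := (rr s)(d := rr s a * rr s b)\<rparr>"
| "step (RDiv d a b) s = s\<lparr>rr := (rr s)(d := rr s a / rr s b)\<rparr>"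
| "step (RLoad d a) s = s\<lparr>rr := (rr s)(d := rm s (ir s a))\<rparr>"
| "step (RStore a b) s = s\<lparr>rm := (rm s)(ir s a := rr s b)\<rparr>"
| "step (ILoad d a) s = s\<lparr>ir := (ir s)(d := im s (ir s a))\<rparr>"
| "step (IStore a b) s = s\<lparr>im := (im s)(ir s a := ir s b)\<rparr>"

fun holds :: "cond \<Rightarrow> state \<Rightarrow> bool" where
  "holds (ILess a b) s = (ir s a < ir s b)"
| "holds (IEq a b) s = (ir s a = ir s b)"
| "holds (RLess a b) s = (rr s a < rr s b)"
| "holds (RLeq a b) s = (rr s a \<le> rr s b)"

inductive exec :: "prog \<Rightarrow> state \<Rightarrow> nat \<Rightarrow> state \<Rightarrow> bool" where
  exec_Skip: "exec Skip s 0 s"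
| exec_Instr: "exec (Instr i) s 1 (step i s)"
| exec_Seq: "exec p s n s' \<Longrightarrow> exec q s' m s'' \<Longrightarrow> exec (Seq p q) s (n + m) s''"
| exec_IfT: "holds c s \<Longrightarrow> exec p s n s' \<Longrightarrow> exec (If c p q) s (n + 1) s'"
| exec_IfF: "\<not> holds c s \<Longrightarrow> exec q s n s' \<Longrightarrow> exec (If c p q) s (n + 1) s'"
| exec_WhileF: "\<not> holds c s \<Longrightarrow> exec (While c p) s 1 s"
| exec_WhileT: "holds c s \<Longrightarrow> exec p s n s' \<Longrightarrow> exec (While c p) s' m s''
                 \<Longrightarrow> exec (While c p) s (n + m + 1) s''"

text \<open>Input encoding: integer registers 0,1 hold T and L; real registers
0..3 hold Cbar, Cund, V, Vbar; real memory cell t holds x_t and cell T+t holds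
y_t (1 \<le> t \<le> T); everything else is 0.\<close>

definition init_state ::
  "nat \<Rightarrow> nat \<Rightarrow> real \<Rightarrow> real \<Rightarrow> real \<Rightarrow> real \<Rightarrow> (int \<Rightarrow> real) \<Rightarrow> (int \<Rightarrow> real) \<Rightarrow> state" where
  "init_state T L Cb Cu V Vb x y =
     \<lparr> ir = (\<lambda>_. 0)(0 := int T, 1 := int L),
       rr = (\<lambda>_. 0)(0 := Cb, 1 := Cu, 2 := V, 3 := Vb),
       im = (\<lambda>_. 0),
       rm = (\<lambda>a. if 1 \<le> a \<and> a \<le> int T then x a
                 else if int T + 1 \<le> a \<and> a \<le> 2 * int T then y (a - int T) else 0) \<rparr>"

text \<open>Output decoding: integer registers 0,1,2 hold k, m, t; the set S is
the support of the integer memory.\<close>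

definition output_index :: "state \<Rightarrow> int \<times> int \<times> int set \<times> int" where
  "output_index s = (ir s 0, ir s 1, {a. im s a \<noteq> 0}, ir s 2)"

definition Fam :: "nat \<Rightarrow> nat \<Rightarrow> nat \<Rightarrow> real \<Rightarrow> real \<Rightarrow> real \<Rightarrow> (int \<times> int \<times> int set \<times> int) set" where
  "Fam j T L Cb Cu V =
     {(k, m, S, t). 1 \<le> k \<and> k \<le> int T - 1 \<and> Cb - Cu - of_int k * V > 0
        \<and> 0 \<le> m \<and> m \<le> k - 1 \<and> S \<subseteq> {0 .. min (k - 1) (int L - m - 2)}
        \<and> (if j = 1 then k + 1 \<le> t \<and> t \<le> int T - m - 1
                    else m + 2 \<le> t \<and> t \<le> int T - k)}"

definition Viol :: "nat \<Rightarrow> real \<Rightarrow> real \<Rightarrow> real \<Rightarrow> (int \<Rightarrow> real) \<Rightarrow> (int \<Rightarrow> real)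
                    \<Rightarrow> int \<times> int \<times> int set \<times> int \<Rightarrow> real" where
  "Viol j Cu V Vb x y idx = (case idx of (k, m, S, t) \<Rightarrow>
     if j = 1 then
       x t - x (t - k)
       - ((Cu + of_int (k - m) * V - Vb) * y (t + m + 1)
          + V * (\<Sum>i\<in>{1..m}. y (t + i)) + Vb * y t - Cu * y (t - k)
          - (\<Sum>s\<in>S. (Cu + of_int (k - s) * V - Vb) * (y (t - s) - y (t - s - 1))))
     else
       x t - x (t + k)
       - ((Cu + of_int (k - m) * V - Vb) * y (t - m - 1)
          + V * (\<Sum>i\<in>{1..m}. y (t - i)) + Vb * y t - Cu * y (t + k)
          - (\<Sum>s\<in>S. (Cu + of_int (k - s) * V - Vb) * (y (t + s) - y (t + s + 1)))))"

end

theory Submission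
  imports Defs
begin


definition runs :: "prog \<Rightarrow> state \<Rightarrow> nat \<Rightarrow> (state \<Rightarrow> bool) \<Rightarrow> bool" where
  "runs p s b Q \<longleftrightarrow> (\<exists>n s'. exec p s n s' \<and> n \<le> b \<and> Q s')"

fun lfrun :: "prog \<Rightarrow> state \<Rightarrow> state" where
  "lfrun Skip s = s"
| "lfrun (Instr i) s = step i s"
| "lfrun (Seq p q) s = lfrun q (lfrun p s)"
| "lfrun (If c p q) s = (if holds c s then lfrun p s else lfrun q s)"
| "lfrun (While c p) s = s"

fun lfcost :: "prog \<Rightarrow> nat" where
  "lfcost Skip = 0"
| "lfcost (Instr i) = 1"
| "lfcost (Seq p q) = lfcost p + lfcost q"
| "lfcost (If c p q) = max (lfcost p) (lfcost q) + 1"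
| "lfcost (While c p) = 0"

fun loopfree :: "prog \<Rightarrow> bool" where
  "loopfree (Seq p q) = (loopfree p \<and> loopfree q)"
| "loopfree (If c p q) = (loopfree p \<and> loopfree q)"
| "loopfree (While c p) = False"
| "loopfree _ = True"

lemma exec_lf: "loopfree p \<Longrightarrow> \<exists>n. exec p s n (lfrun p s) \<and> n \<le> lfcost p"
proof (induction p arbitrary: s)
  case Skip then show ?case by (auto intro: exec_Skip)
next
  case (Instr i) then show ?case by (auto intro: exec_Instr)
next
  case (Seq p q)
  then obtain n1 where 1: "exec p s n1 (lfrun p s)" "n1 \<le> lfcost p" by auto
  from Seq obtain n2 where 2: "exec q (lfrun p s) n2 (lfrun q (lfrun p s))" "n2 \<le> lfcost q" by auto
  show ?case using exec_Seq[OF 1(1) 2(1)] 1(2) 2(2) by auto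
next
  case (If c p q)
  show ?case
  proof (cases "holds c s")
    case True
    with If obtain n where "exec p s n (lfrun p s)" "n \<le> lfcost p" by auto
    with True show ?thesis by (auto intro!: exec_IfT)
  next
    case False
    with If obtain n where "exec q s n (lfrun q s)" "n \<le> lfcost q" by auto
    with False show ?thesis by (auto intro!: exec_IfF)
  qed
next
  case (While c p) then show ?case by simp
qed

lemma runs_lf: "loopfree p \<Longrightarrow> lfcost p \<le> b \<Longrightarrow> Q (lfrun p s) \<Longrightarrow> runs p s b Q"
  unfolding runs_def using exec_lf by (meson le_trans)

lemma runs_Seq: "runs p s b1 (\<lambda>s'. runs q s' b2 Q) \<Longrightarrow> b1 + b2 \<le> b \<Longrightarrow> runs (Seq p q) s b Q"
  unfolding runs_def
  by (meson add_mono exec_Seq order_trans)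

lemma runs_mono: "runs p s b Q \<Longrightarrow> b \<le> b' \<Longrightarrow> (\<And>s. Q s \<Longrightarrow> Q' s) \<Longrightarrow> runs p s b' Q'"
  unfolding runs_def by (meson le_trans)

lemma runs_If: "(holds c s \<Longrightarrow> runs p s b Q) \<Longrightarrow> (\<not> holds c s \<Longrightarrow> runs q s b Q) \<Longrightarrow> b + 1 \<le> b'
  \<Longrightarrow> runs (If c p q) s b' Q"
  unfolding runs_def
  by (metis add_le_mono1 exec_IfF exec_IfT le_trans)

lemma runs_Skip: "Q s \<Longrightarrow> runs Skip s b Q"
  unfolding runs_def by (auto intro: exec_Skip)

lemma runs_While_aux:
  assumes body: "\<And>s. I s \<Longrightarrow> holds c s \<Longrightarrow> runs p s cb (\<lambda>s'. I s' \<and> f s' < f s)"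
  shows "I s \<Longrightarrow> runs (While c p) s ((f s + 1) * (cb + 1)) (\<lambda>s'. I s' \<and> \<not> holds c s')"
proof (induction "f s" arbitrary: s rule: less_induct)
  case less
  show ?case
  proof (cases "holds c s")
    case True
    from body[OF less.prems True] obtain n s1 where s1: "exec p s n s1" "n \<le> cb" "I s1" "f s1 < f s"
      unfolding runs_def by auto
    from less.hyps[OF s1(4) s1(3)] obtain m s2 where s2: "exec (While c p) s1 m s2"
      "m \<le> (f s1 + 1) * (cb + 1)" "I s2" "\<not> holds c s2" unfolding runs_def by auto
    have "n + m + 1 \<le> (f s + 1) * (cb + 1)"
    proof -
      have "(f s1 + 1) * (cb + 1) \<le> f s * (cb + 1)" using s1(4) by (intro mult_right_mono) auto
      then show ?thesis using s1(2) s2(2) by (simp add: algebra_simps)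
    qed
    then show ?thesis unfolding runs_def using exec_WhileT[OF True s1(1) s2(1)] s2(3,4) by blast
  next
    case False
    have "exec (While c p) s 1 s" using False by (rule exec_WhileF)
    then show ?thesis unfolding runs_def using less.prems False by fastforce
  qed
qed

lemma runs_While:
  assumes body: "\<And>s. I s \<Longrightarrow> holds c s \<Longrightarrow> runs p s cb (\<lambda>s'. I s' \<and> f s' < f s)"
    and "I s" and "f s \<le> N" and "(N + 1) * (cb + 1) \<le> b"
    and "\<And>s. I s \<Longrightarrow> \<not> holds c s \<Longrightarrow> Q s"
  shows "runs (While c p) s b Q"
proof -
  have "(f s + 1) * (cb + 1) \<le> (N + 1) * (cb + 1)" using assms(3) by (intro mult_right_mono) auto
  moreover have "runs (While c p) s ((f s + 1) * (cb + 1)) (\<lambda>s'. I s' \<and> \<not> holds c s')"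
    using runs_While_aux[of I c p cb f s] body assms(2) by blast
  ultimately show ?thesis using assms(4,5)
    by (elim runs_mono) auto
qed

lemma runs_SeqI: "runs p s b1 R \<Longrightarrow> (\<And>s'. R s' \<Longrightarrow> runs q s' b2 Q) \<Longrightarrow> runs (Seq p q) s (b1 + b2) Q"
  by (rule runs_Seq) (auto elim: runs_mono)

fun seqs :: "prog list \<Rightarrow> prog" where
  "seqs [] = Skip"
| "seqs [p] = p"
| "seqs (p # ps) = Seq p (seqs ps)"




definition seqi :: "instr list \<Rightarrow> prog" where "seqi is = seqs (map Instr is)"

(* int regs: 0 bk,1 bm,2 bt,3 T,4 L,5 bx,6 by,7 dx,8 k,9 t,10 m,11 s,12 mmax/bound,13 idx,
   14-17 temps, 18 one, 20 zero.
   real regs: 0 Cb,1 Cu,2 V,3 Vb,4 BV,5 zero,6 Q, 7-15 temps *)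

definition GBODY :: prog where
  "GBODY = Seq (seqi [ISub 14 9 11, IMul 15 7 14, IAdd 15 6 15, RLoad 8 15,
      IConst 16 1, ISub 14 14 16, IMul 15 7 14, IAdd 15 6 15, RLoad 9 15,
      RSub 8 8 9,
      ISub 14 8 11, OfInt 10 14, RMul 10 10 2, RAdd 10 10 1, RSub 10 10 3,
      IConst 16 (-1), ISub 17 16 11, RLoad 11 17])
   (Seq (If (RLess 5 8) (seqi [RMul 12 10 8, RAdd 11 11 12]) Skip)
     (seqi [IConst 16 1, ISub 17 17 16, RStore 17 11, IAdd 11 11 16]))"

definition MB1 :: prog where
  "MB1 = Seq (seqi [ISub 13 4 10, IConst 16 2, ISub 13 13 16, IConst 16 1, ISub 17 8 16])
     (Seq (If (ILess 17 13) (seqi [IAdd 13 17 20]) Skip)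
      (Seq (seqi [IConst 16 (-1)]) (If (ILess 13 16) (seqi [IAdd 13 16 20]) Skip)))"

definition MB2 :: prog where
  "MB2 = seqi [IConst 16 (-2), ISub 17 16 13, RLoad 13 17,
   IMul 15 7 9, IAdd 15 5 15, RLoad 7 15,
   ISub 14 9 8, IMul 15 7 14, IAdd 15 5 15, RLoad 8 15,
   IAdd 14 9 10, IConst 16 1, IAdd 14 14 16, IMul 15 7 14, IAdd 15 6 15, RLoad 9 15,
   IMul 15 7 9, IAdd 15 6 15, RLoad 10 15,
   ISub 14 9 8, IMul 15 7 14, IAdd 15 6 15, RLoad 11 15,
   ISub 14 8 10, OfInt 12 14, RMul 12 12 2, RAdd 12 12 1, RSub 12 12 3,
   RMul 12 12 9,
   RMul 14 2 6, RAdd 12 12 14,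
   RMul 14 3 10, RAdd 12 12 14,
   RMul 14 1 11, RSub 12 12 14,
   RSub 15 7 8, RSub 15 15 12, RAdd 15 15 13]"

definition MB3 :: prog where
  "MB3 = Seq (If (RLess 4 15) (seqi [RAdd 4 15 5, IAdd 0 8 20, IAdd 1 10 20, IAdd 2 9 20]) Skip)
     (seqi [RAdd 6 6 9, IConst 16 1, IAdd 10 10 16])"

definition MBODY :: prog where "MBODY = Seq MB1 (Seq MB2 MB3)"

definition MLOOP :: prog where "MLOOP = While (ILess 10 12) MBODY"
definition GLOOP :: prog where "GLOOP = While (ILess 11 8) GBODY"

definition GINIT :: prog where "GINIT = seqi [IConst 14 (-1), RStore 14 5, IConst 11 0]"
definition MINIT :: prog where
  "MINIT = Seq (seqi [IAdd 12 8 20, ISub 14 3 9]) (Seq (If (ILess 14 12) (seqi [IAdd 12 14 20]) Skip)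
     (seqi [IConst 10 0, RAdd 6 5 5]))"
definition TINC :: prog where "TINC = seqi [IConst 16 1, IAdd 9 9 16]"

definition TBODY :: prog where "TBODY = Seq GINIT (Seq GLOOP (Seq MINIT (Seq MLOOP TINC)))"
definition TLOOP :: prog where "TLOOP = Seq (seqi [IConst 14 1, IAdd 9 8 14]) (While (ILess 9 3) TBODY)"
definition KBODY :: prog where
  "KBODY = Seq (seqi [OfInt 7 8, RMul 7 7 2, RAdd 7 7 1])
     (Seq (If (RLess 7 0) TLOOP Skip) (seqi [IConst 14 1, IAdd 8 8 14]))"
definition KLOOP :: prog where "KLOOP = While (ILess 8 3) KBODY"

definition SINIT :: prog where
  "SINIT = Seq (seqi [IConst 16 1, ISub 12 0 16, ISub 13 4 1, IConst 16 2, ISub 13 13 16])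
     (Seq (If (ILess 13 12) (seqi [IAdd 12 13 20]) Skip)
       (seqi [IConst 16 1, IAdd 12 12 16, IConst 11 0, IConst 18 1]))"
definition SBODY :: prog where
  "SBODY = Seq (seqi [ISub 14 2 11, IMul 15 7 14, IAdd 15 6 15, RLoad 8 15, IConst 16 1, ISub 14 14 16,
       IMul 15 7 14, IAdd 15 6 15, RLoad 9 15])
     (Seq (If (RLess 9 8) (seqi [IStore 11 18]) Skip) (seqi [IConst 16 1, IAdd 11 11 16]))"
definition SLOOP :: prog where "SLOOP = While (ILess 11 12) SBODY"

definition MAIN :: prog where "MAIN = Seq (seqi [IConst 8 1]) (Seq KLOOP (Seq SINIT SLOOP))"

definition SETUP :: "nat \<Rightarrow> prog" where
  "SETUP j = (if j = 1 then
     seqi [IAdd 3 0 20, IAdd 4 1 20, IConst 0 0, IConst 1 0, IConst 5 0, IAdd 6 3 20, IConst 7 1]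
   else seqi [IAdd 3 0 20, IAdd 4 1 20, IConst 0 0, IConst 1 0, IConst 14 1, IAdd 5 3 14,
      IAdd 6 3 3, IAdd 6 6 14, IConst 7 (-1)])"
definition FINAL :: prog where "FINAL = seqi [IMul 14 7 2, IAdd 2 5 14]"
definition PROG :: "nat \<Rightarrow> prog" where "PROG j = Seq (SETUP j) (Seq MAIN FINAL)"

lemmas prog_defs = GBODY_def MB1_def MB2_def MB3_def MBODY_def GINIT_def MINIT_def TINC_def
  SINIT_def SBODY_def FINAL_def seqi_def

lemma lf_facts: "loopfree GBODY" "loopfree MB1" "loopfree MB2" "loopfree MB3" "loopfree MBODY"
  "loopfree GINIT" "loopfree MINIT" "loopfree TINC" "loopfree SINIT" "loopfree SBODY" "loopfree FINAL"
  "loopfree (SETUP j)"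
  by (simp_all add: prog_defs SETUP_def)

lemma cost_facts: "lfcost GBODY \<le> 30" "lfcost MBODY \<le> 60" "lfcost GINIT \<le> 3" "lfcost MINIT \<le> 10"
  "lfcost TINC \<le> 2" "lfcost SINIT \<le> 20" "lfcost SBODY \<le> 20" "lfcost FINAL \<le> 2" "lfcost (SETUP j) \<le> 10"
  by (simp_all add: prog_defs SETUP_def)






locale alg =
  fixes T :: nat and L :: nat and Cb Cu V Vb :: real and bx byy dx :: int
    and M0 X Y :: "int \<Rightarrow> real"
  assumes T_pos: "0 < T" and V_pos: "0 < V" and Vb_lt: "Vb < Cu + V"
    and mem: "\<And>u. 1 \<le> u \<Longrightarrow> u \<le> int T \<Longrightarrow>
       M0 (bx + dx * u) = X u \<and> M0 (byy + dx * u) = Y u \<and> 0 < bx + dx * u \<and> 0 < byy + dx * u"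
begin

definition env :: "state \<Rightarrow> bool" where
  "env s \<longleftrightarrow> ir s 3 = int T \<and> ir s 4 = int L \<and> ir s 5 = bx \<and> ir s 6 = byy \<and> ir s 7 = dx
     \<and> ir s 20 = 0 \<and> rr s 0 = Cb \<and> rr s 1 = Cu \<and> rr s 2 = V \<and> rr s 3 = Vb \<and> rr s 5 = 0
     \<and> (\<forall>a>0. rm s a = M0 a)"

definition w :: "int \<Rightarrow> int \<Rightarrow> real" where "w k s = Cu + of_int (k - s) * V - Vb"

definition G :: "int \<Rightarrow> int \<Rightarrow> int \<Rightarrow> real" where
  "G k t M = (\<Sum>s\<in>{0..M}. w k s * max 0 (Y (t - s) - Y (t - s - 1)))"

definition Q :: "int \<Rightarrow> int \<Rightarrow> real" where "Q m t = (\<Sum>i\<in>{1..m}. Y (t + i))"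

definition F :: "int \<times> int \<times> int \<Rightarrow> real" where
  "F p = (case p of (k, m, t) \<Rightarrow> X t - X (t - k)
     - ((Cu + of_int (k - m) * V - Vb) * Y (t + m + 1) + V * Q m t + Vb * Y t - Cu * Y (t - k))
     + G k t (min (k - 1) (int L - m - 2)))"

definition C :: "(int \<times> int \<times> int) set" where
  "C = {(k, m, t). 1 \<le> k \<and> k \<le> int T - 1 \<and> Cb - Cu - of_int k * V > 0 \<and> 0 \<le> m \<and> m \<le> k - 1
      \<and> k + 1 \<le> t \<and> t \<le> int T - m - 1}"

definition P :: "int \<Rightarrow> int \<Rightarrow> int \<Rightarrow> (int \<times> int \<times> int) set" where
  "P k t m = {p \<in> C. fst p < k \<or> (fst p = k \<and> (snd (snd p) < t \<or> (snd (snd p) = t \<and> fst (snd p) < m)))}"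

definition Best :: "(int \<times> int \<times> int) set \<Rightarrow> state \<Rightarrow> bool" where
  "Best PP s \<longleftrightarrow> 0 \<le> rr s 4 \<and> (\<forall>p\<in>PP. F p \<le> rr s 4) \<and>
     (((ir s 0, ir s 1, ir s 2) = (0, 0, 0) \<and> rr s 4 = 0) \<or>
      ((ir s 0, ir s 1, ir s 2) \<in> PP \<and> F (ir s 0, ir s 1, ir s 2) = rr s 4))"

lemma Best_cong: "rr s' 4 = rr s 4 \<Longrightarrow> ir s' 0 = ir s 0 \<Longrightarrow> ir s' 1 = ir s 1 \<Longrightarrow> ir s' 2 = ir s 2
   \<Longrightarrow> Best PP s' = Best PP s"
  unfolding Best_def by simp

definition ktok :: "int \<Rightarrow> int \<Rightarrow> bool" where
  "ktok k t \<longleftrightarrow> 1 \<le> k \<and> k \<le> int T - 1 \<and> Cb - Cu - of_int k * V > 0 \<and> k + 1 \<le> t \<and> t \<le> int T - 1"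

definition IG :: "int \<Rightarrow> int \<Rightarrow> state \<Rightarrow> bool" where
  "IG k t s \<longleftrightarrow> env s \<and> im s = (\<lambda>_. 0) \<and> ir s 8 = k \<and> ir s 9 = t \<and> ktok k t \<and>
     0 \<le> ir s 11 \<and> ir s 11 \<le> k \<and> (\<forall>M\<in>{-1..ir s 11 - 1}. rm s (- M - 2) = G k t M) \<and> Best (P k t 0) s"

lemma G_step: "0 \<le> M \<Longrightarrow> G k t M = G k t (M - 1) + w k M * max 0 (Y (t - M) - Y (t - M - 1))"
proof -
  assume "0 \<le> M"
  then have "{0..M} = insert M {0..M - 1}" by auto
  then show ?thesis unfolding G_def by simp
qed

lemma G_neg: "M < 0 \<Longrightarrow> G k t M = 0"
  unfolding G_def by simp

lemma w_pos: "s < k \<Longrightarrow> 0 < w k s"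
proof -
  assume "s < k"
  then have "1 \<le> k - s" by simp
  then have "V \<le> of_int (k - s) * V" using V_pos by simp
  then show ?thesis unfolding w_def using Vb_lt by simp
qed

lemma Yrd: "env s \<Longrightarrow> 1 \<le> u \<Longrightarrow> u \<le> int T \<Longrightarrow> rm s (byy + dx * u) = Y u"
  unfolding env_def using mem by auto
lemma Xrd: "env s \<Longrightarrow> 1 \<le> u \<Longrightarrow> u \<le> int T \<Longrightarrow> rm s (bx + dx * u) = X u"
  unfolding env_def using mem by auto

lemma gbody: "IG k t s \<Longrightarrow> ir s 11 < ir s 8 \<Longrightarrow>
   runs GBODY s 30 (\<lambda>s'. IG k t s' \<and> nat (k - ir s' 11) < nat (k - ir s 11))"
proof -
  assume ig: "IG k t s" and lt: "ir s 11 < ir s 8"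
  define s' where "s' = lfrun GBODY s"
  have e: "env s" and kt: "ktok k t" and r8: "ir s 8 = k" and r9: "ir s 9 = t" and sv0: "0 \<le> ir s 11"
    and arr: "\<forall>M\<in>{-1..ir s 11 - 1}. rm s (- M - 2) = G k t M" and b: "Best (P k t 0) s" and imz: "im s = (\<lambda>_. 0)"
    using ig unfolding IG_def by auto
  have svk: "ir s 11 < k" using lt r8 by simp
  have y1: "rm s (byy + dx * (t - ir s 11)) = Y (t - ir s 11)" using Yrd[OF e] svk sv0 kt unfolding ktok_def by auto
  have y2: "rm s (byy + dx * (t - ir s 11 - 1)) = Y (t - ir s 11 - 1)" using Yrd[OF e] svk sv0 kt unfolding ktok_def by auto
  have gprev: "rm s (- 1 - ir s 11) = G k t (ir s 11 - 1)" using arr[rule_format, of "ir s 11 - 1"] sv0 by simp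
  have ev: "ir s 3 = int T" "ir s 4 = int L" "ir s 5 = bx" "ir s 6 = byy" "ir s 7 = dx"
     "ir s 20 = 0" "rr s 0 = Cb" "rr s 1 = Cu" "rr s 2 = V" "rr s 3 = Vb" "rr s 5 = 0"
    using e unfolding env_def by auto
  have st: "ir s' 11 = ir s 11 + 1" "ir s' 8 = k" "ir s' 9 = t" "im s' = im s"
    "ir s' 0 = ir s 0" "ir s' 1 = ir s 1" "ir s' 2 = ir s 2" "rr s' 4 = rr s 4"
    "ir s' 3 = int T" "ir s' 4 = int L" "ir s' 5 = bx" "ir s' 6 = byy" "ir s' 7 = dx"
     "ir s' 20 = 0" "rr s' 0 = Cb" "rr s' 1 = Cu" "rr s' 2 = V" "rr s' 3 = Vb" "rr s' 5 = 0"
    unfolding s'_def using ev r8 r9 by (simp_all add: GBODY_def seqi_def)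
  have rmeq: "rm s' = (rm s)(-2 - ir s 11 := (if Y (t - ir s 11 - 1) < Y (t - ir s 11)
     then G k t (ir s 11 - 1) + (real_of_int (k - ir s 11) * V + Cu - Vb) * (Y (t - ir s 11) - Y (t - ir s 11 - 1))
     else G k t (ir s 11 - 1)))"
    unfolding s'_def using ev r8 r9 y1 y2 gprev
    by (simp add: GBODY_def seqi_def)
  have val: "(if Y (t - ir s 11 - 1) < Y (t - ir s 11)
     then G k t (ir s 11 - 1) + (real_of_int (k - ir s 11) * V + Cu - Vb) * (Y (t - ir s 11) - Y (t - ir s 11 - 1))
     else G k t (ir s 11 - 1)) = G k t (ir s 11)"
  proof (cases "Y (t - ir s 11 - 1) < Y (t - ir s 11)")
    case True
    then have "max 0 (Y (t - ir s 11) - Y (t - ir s 11 - 1)) = Y (t - ir s 11) - Y (t - ir s 11 - 1)" by simp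
    then show ?thesis using True G_step[OF sv0, of k t] unfolding w_def by (simp add: algebra_simps)
  next
    case False
    then have "max 0 (Y (t - ir s 11) - Y (t - ir s 11 - 1)) = 0" by simp
    then show ?thesis using False G_step[OF sv0, of k t] by simp
  qed
  have env': "env s'" unfolding env_def using st rmeq e sv0 unfolding env_def by auto
  have arr': "\<forall>M\<in>{-1..ir s' 11 - 1}. rm s' (- M - 2) = G k t M"
  proof
    fix M assume "M \<in> {-1..ir s' 11 - 1}"
    then have "M \<in> {-1..ir s 11 - 1} \<or> M = ir s 11" using st by auto
    then show "rm s' (- M - 2) = G k t M"
      using arr rmeq val by auto
  qed
  have "IG k t s'" unfolding IG_def using env' arr' st kt imz svk sv0 Best_cong[of s' s] b by auto
  moreover have "nat (k - ir s' 11) < nat (k - ir s 11)" using st svk by simp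
  ultimately show ?thesis unfolding s'_def
    by (intro runs_lf) (use lf_facts cost_facts in auto)
qed

lemma gloop: "IG k t s \<Longrightarrow> runs GLOOP s (31 * (T + 1)) (\<lambda>s'. IG k t s' \<and> ir s' 11 = k)"
  unfolding GLOOP_def
proof (rule runs_While[where f = "\<lambda>s. nat (k - ir s 11)" and N = T and cb = 30])
  fix s assume "IG k t s" "holds (ILess 11 8) s"
  then show "runs GBODY s 30 (\<lambda>s'. IG k t s' \<and> nat (k - ir s' 11) < nat (k - ir s 11))"
    using gbody by simp
next
  assume "IG k t s" then show "nat (k - ir s 11) \<le> T" unfolding IG_def ktok_def by auto
next
  fix s assume "IG k t s" "\<not> holds (ILess 11 8) s"
  then show "IG k t s \<and> ir s 11 = k" unfolding IG_def by auto
qed (auto)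

definition IM :: "int \<Rightarrow> int \<Rightarrow> state \<Rightarrow> bool" where
  "IM k t s \<longleftrightarrow> env s \<and> im s = (\<lambda>_. 0) \<and> ir s 8 = k \<and> ir s 9 = t \<and> ktok k t \<and>
     ir s 12 = min k (int T - t) \<and> 0 \<le> ir s 10 \<and> ir s 10 \<le> ir s 12 \<and> rr s 6 = Q (ir s 10) t \<and>
     (\<forall>M\<in>{-1..k - 1}. rm s (- M - 2) = G k t M) \<and> Best (P k t (ir s 10)) s"

lemma Q_step: "0 \<le> m \<Longrightarrow> Q (m + 1) t = Q m t + Y (t + m + 1)"
proof -
  assume "0 \<le> m"
  then have "{1..m+1} = insert (m+1) {1..m}" by auto
  then show ?thesis unfolding Q_def by (simp add: add.commute add.left_commute)
qed

lemma G_max: "G k t (max (-1) M) = G k t M"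
  by (cases "M < -1") (auto simp: G_neg max_def)

lemma P_step: "(k, m, t) \<in> C \<Longrightarrow> P k t (m + 1) = insert (k, m, t) (P k t m)"
  unfolding P_def by auto

lemma Best_ins:
  assumes "Best PP s" "PP' = insert p PP"
    and "(rr s 4 < F p \<and> rr s' 4 = F p \<and> (ir s' 0, ir s' 1, ir s' 2) = p) \<or>
         (\<not> rr s 4 < F p \<and> rr s' 4 = rr s 4 \<and> ir s' 0 = ir s 0 \<and> ir s' 1 = ir s 1 \<and> ir s' 2 = ir s 2)"
  shows "Best PP' s'"
  using assms unfolding Best_def by (auto 0 3)

lemma mbody: "IM k t s \<Longrightarrow> ir s 10 < ir s 12 \<Longrightarrow>
   runs MBODY s 60 (\<lambda>s'. IM k t s' \<and> nat (ir s' 12 - ir s' 10) < nat (ir s 12 - ir s 10))"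
proof -
  assume im: "IM k t s" and lt: "ir s 10 < ir s 12"
  define m where "m = ir s 10"
  define s1 where "s1 = lfrun MB1 s"
  define s2 where "s2 = lfrun MB2 s1"
  define s3 where "s3 = lfrun MB3 s2"
  have s3eq: "s3 = lfrun MBODY s" unfolding s3_def s2_def s1_def MBODY_def by simp
  have e: "env s" and kt: "ktok k t" and r8: "ir s 8 = k" and r9: "ir s 9 = t" and m0: "0 \<le> m"
    and arr: "\<forall>M\<in>{-1..k - 1}. rm s (- M - 2) = G k t M" and b: "Best (P k t m) s" and imz: "im s = (\<lambda>_. 0)"
    and r12: "ir s 12 = min k (int T - t)" and r6: "rr s 6 = Q m t" and r10: "ir s 10 = m"
    using im unfolding IM_def m_def by auto
  have mlt: "m < k" "m < int T - t" using lt r12 m_def by auto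
  have inC: "(k, m, t) \<in> C" using kt mlt m0 unfolding ktok_def C_def by auto
  have ev: "ir s 3 = int T" "ir s 4 = int L" "ir s 5 = bx" "ir s 6 = byy" "ir s 7 = dx"
     "ir s 20 = 0" "rr s 0 = Cb" "rr s 1 = Cu" "rr s 2 = V" "rr s 3 = Vb" "rr s 5 = 0"
    using e unfolding env_def by auto
  have s1f: "ir s1 13 = max (-1) (min (k - 1) (int L - m - 2))" "rr s1 = rr s" "rm s1 = rm s" "im s1 = im s"
    "\<And>r. r \<noteq> 13 \<Longrightarrow> r \<noteq> 16 \<Longrightarrow> r \<noteq> 17 \<Longrightarrow> ir s1 r = ir s r"
    unfolding s1_def using ev r8 r10 by (auto simp add: MB1_def seqi_def)
  have idxr: "-1 \<le> ir s1 13" "ir s1 13 \<le> k - 1" using s1f(1) kt unfolding ktok_def by auto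
  have gr: "rm s (- 2 - ir s1 13) = G k t (min (k - 1) (int L - m - 2))"
  proof -
    have "rm s (- ir s1 13 - 2) = G k t (ir s1 13)" using arr idxr by auto
    moreover have "- ir s1 13 - 2 = - 2 - ir s1 13" by simp
    ultimately show ?thesis using s1f(1) G_max by metis
  qed
  have tr: "1 \<le> t - k" "t \<le> int T" "1 \<le> t" "t + m + 1 \<le> int T" "1 \<le> t + m + 1" "t - k \<le> int T"
    using kt mlt m0 unfolding ktok_def by auto
  have xa: "rm s (bx + dx * t) = X t" and xb: "rm s (bx + dx * (t - k)) = X (t - k)"
    and ya: "rm s (byy + dx * (t + m + 1)) = Y (t + m + 1)" and yb: "rm s (byy + dx * t) = Y t"
    and yc: "rm s (byy + dx * (t - k)) = Y (t - k)"
    using Xrd[OF e] Yrd[OF e] tr by auto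
  have s2f: "rm s2 = rm s" "im s2 = im s"
    "\<And>r. r \<noteq> 14 \<Longrightarrow> r \<noteq> 13 \<Longrightarrow> r \<noteq> 16 \<Longrightarrow> r \<noteq> 17 \<Longrightarrow> r \<noteq> 15 \<Longrightarrow> ir s2 r = ir s r"
    "\<And>r. r < 7 \<Longrightarrow> rr s2 r = rr s r"
    "rr s2 9 = Y (t + m + 1)"
    unfolding s2_def using s1f ev r8 r9 r10 ya by (auto simp add: MB2_def seqi_def)
  have v1: "rr s2 15 = X t - X (t - k) - ((real_of_int (k - m) * V + Cu - Vb) * Y (t + m + 1)
      + V * Q m t + Vb * Y t - Cu * Y (t - k)) + G k t (min (k - 1) (int L - m - 2))"
    unfolding s2_def using s1f ev r8 r9 r10 xa xb ya yb yc gr r6 by (simp add: MB2_def seqi_def)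
  have v2: "rr s2 15 = F (k, m, t)" unfolding v1 F_def by (simp add: algebra_simps)
  have s3f: "rm s3 = rm s" "im s3 = im s" "ir s3 10 = m + 1" "rr s3 6 = Q m t + Y (t + m + 1)"
    "\<And>r. r \<in> {3,4,5,6,7,8,9,12,20} \<Longrightarrow> ir s3 r = ir s r"
    "\<And>r. r \<in> {0,1,2,3,5} \<Longrightarrow> rr s3 r = rr s r"
    unfolding s3_def using s2f r6 r10 by (auto simp add: MB3_def seqi_def)
  have s3b: "(rr s2 4 < F (k, m, t) \<and> rr s3 4 = F (k, m, t) \<and> (ir s3 0, ir s3 1, ir s3 2) = (k, m, t)) \<or>
         (\<not> rr s2 4 < F (k, m, t) \<and> rr s3 4 = rr s2 4 \<and> ir s3 0 = ir s2 0 \<and> ir s3 1 = ir s2 1 \<and> ir s3 2 = ir s2 2)"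
    unfolding s3_def using s2f v2 ev r8 r9 r10 by (auto simp add: MB3_def seqi_def)
  have b2: "Best (P k t m) s2" using b Best_cong[of s2 s] s2f by simp
  have b3: "Best (P k t (m + 1)) s3" using Best_ins[OF b2 P_step[OF inC] s3b] .
  have env3: "env s3" using e s3f unfolding env_def by simp
  have "IM k t s3" unfolding IM_def using env3 s3f b3 kt r8 r9 r12 imz mlt m0 arr Q_step[OF m0, of t] by auto
  moreover have "nat (ir s3 12 - ir s3 10) < nat (ir s 12 - ir s 10)" using s3f r10 lt by simp
  ultimately show ?thesis unfolding s3eq
    by (intro runs_lf) (use lf_facts cost_facts in auto)
qed

lemma mloop: "IM k t s \<Longrightarrow> runs MLOOP s (61 * (T + 1)) (\<lambda>s'. IM k t s' \<and> ir s' 10 = ir s' 12)"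
  unfolding MLOOP_def
proof (rule runs_While[where f = "\<lambda>s. nat (ir s 12 - ir s 10)" and N = T and cb = 60])
  fix s assume "IM k t s" "holds (ILess 10 12) s"
  then show "runs MBODY s 60 (\<lambda>s'. IM k t s' \<and> nat (ir s' 12 - ir s' 10) < nat (ir s 12 - ir s 10))"
    using mbody by simp
next
  assume "IM k t s" then show "nat (ir s 12 - ir s 10) \<le> T" unfolding IM_def ktok_def by auto
next
  fix s assume "IM k t s" "\<not> holds (ILess 10 12) s"
  then show "IM k t s \<and> ir s 10 = ir s 12" unfolding IM_def by auto
qed (auto)

definition IT :: "int \<Rightarrow> state \<Rightarrow> bool" where
  "IT k s \<longleftrightarrow> env s \<and> im s = (\<lambda>_. 0) \<and> ir s 8 = k \<and> 1 \<le> k \<and> k \<le> int T - 1 \<and>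
     Cb - Cu - of_int k * V > 0 \<and> k + 1 \<le> ir s 9 \<and> ir s 9 \<le> int T \<and> Best (P k (ir s 9) 0) s"

lemma P_tnext: "ktok k t \<Longrightarrow> P k t (min k (int T - t)) = P k (t + 1) 0"
  unfolding P_def C_def ktok_def by auto

lemma tbody: "IT k s \<Longrightarrow> ir s 9 < ir s 3 \<Longrightarrow>
   runs TBODY s (3 + (31 * (T + 1) + (10 + (61 * (T + 1) + 2))))
     (\<lambda>s'. IT k s' \<and> nat (int T - ir s' 9) < nat (int T - ir s 9))"
proof -
  assume it: "IT k s" and lt: "ir s 9 < ir s 3"
  define t where "t = ir s 9"
  have e: "env s" and r8: "ir s 8 = k" and imz: "im s = (\<lambda>_. 0)" and b: "Best (P k t 0) s"
    using it unfolding IT_def t_def by auto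
  have ev: "ir s 3 = int T" "ir s 4 = int L" "ir s 5 = bx" "ir s 6 = byy" "ir s 7 = dx"
     "ir s 20 = 0" "rr s 0 = Cb" "rr s 1 = Cu" "rr s 2 = V" "rr s 3 = Vb" "rr s 5 = 0"
    using e unfolding env_def by auto
  have kt: "ktok k t" using it lt ev unfolding IT_def ktok_def t_def by auto
  show ?thesis unfolding TBODY_def
  proof (rule runs_SeqI)
    show "runs GINIT s 3 (IG k t)"
    proof (rule runs_lf)
      let ?s = "lfrun GINIT s"
      have f: "ir ?s 11 = 0" "rm ?s = (rm s)(-1 := 0)" "\<And>r. r \<noteq> 11 \<Longrightarrow> r \<noteq> 14 \<Longrightarrow> ir ?s r = ir s r"
        "rr ?s = rr s" "im ?s = im s"
        using ev by (auto simp: GINIT_def seqi_def)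
      have "env ?s" using e f unfolding env_def by auto
      moreover have "Best (P k t 0) ?s" using b Best_cong[of ?s s] f by simp
      ultimately show "IG k t ?s" unfolding IG_def using f kt r8 imz t_def G_neg[of "-1" k t]
        unfolding ktok_def by auto
    qed (use lf_facts cost_facts in auto)
  next
    fix sa assume sa: "IG k t sa"
    show "runs (Seq GLOOP (Seq MINIT (Seq MLOOP TINC))) sa (31 * (T + 1) + (10 + (61 * (T + 1) + 2)))
     (\<lambda>s'. IT k s' \<and> nat (int T - ir s' 9) < nat (int T - ir s 9))"
    proof (rule runs_SeqI[OF gloop[OF sa]])
      fix sb assume sb: "IG k t sb \<and> ir sb 11 = k"
      show "runs (Seq MINIT (Seq MLOOP TINC)) sb (10 + (61 * (T + 1) + 2))
        (\<lambda>s'. IT k s' \<and> nat (int T - ir s' 9) < nat (int T - ir s 9))"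
      proof (rule runs_SeqI)
        show "runs MINIT sb 10 (IM k t)"
        proof (rule runs_lf)
          let ?s = "lfrun MINIT sb"
          have eb: "env sb" and bb: "Best (P k t 0) sb" and arr: "\<forall>M\<in>{-1..k - 1}. rm sb (- M - 2) = G k t M"
            and rb: "ir sb 8 = k" "ir sb 9 = t" "im sb = (\<lambda>_. 0)"
            using sb unfolding IG_def by auto
          have evb: "ir sb 3 = int T" "ir sb 20 = 0" "rr sb 5 = 0" using eb unfolding env_def by auto
          have f: "ir ?s 10 = 0" "ir ?s 12 = min k (int T - t)" "rm ?s = rm sb"
            "\<And>r. r \<noteq> 10 \<Longrightarrow> r \<noteq> 12 \<Longrightarrow> r \<noteq> 14 \<Longrightarrow> ir ?s r = ir sb r"
            "\<And>r. r \<noteq> 6 \<Longrightarrow> rr ?s r = rr sb r" "rr ?s 6 = 0" "im ?s = im sb"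
            using evb rb by (auto simp: MINIT_def seqi_def)
          have "env ?s" using eb f unfolding env_def by auto
          moreover have "Best (P k t 0) ?s" using bb Best_cong[of ?s sb] f by simp
          ultimately show "IM k t ?s" unfolding IM_def using f kt rb arr unfolding ktok_def
            by (auto simp: Q_def)
        qed (use lf_facts cost_facts in auto)
      next
        fix sc assume sc: "IM k t sc"
        show "runs (Seq MLOOP TINC) sc (61 * (T + 1) + 2)
          (\<lambda>s'. IT k s' \<and> nat (int T - ir s' 9) < nat (int T - ir s 9))"
        proof (rule runs_SeqI[OF mloop[OF sc]])
          fix sd assume sd: "IM k t sd \<and> ir sd 10 = ir sd 12"
          show "runs TINC sd 2 (\<lambda>s'. IT k s' \<and> nat (int T - ir s' 9) < nat (int T - ir s 9))"
          proof (rule runs_lf)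
            let ?s = "lfrun TINC sd"
            have ed: "env sd" and bd: "Best (P k t (ir sd 10)) sd"
              and rd: "ir sd 8 = k" "ir sd 9 = t" "im sd = (\<lambda>_. 0)" "ir sd 10 = min k (int T - t)"
              using sd unfolding IM_def by auto
            have f: "ir ?s 9 = t + 1" "rm ?s = rm sd"
              "\<And>r. r \<noteq> 9 \<Longrightarrow> r \<noteq> 16 \<Longrightarrow> ir ?s r = ir sd r"
              "rr ?s = rr sd" "im ?s = im sd"
              using rd by (auto simp: TINC_def seqi_def)
            have "env ?s" using ed f unfolding env_def by auto
            moreover have "Best (P k (t + 1) 0) ?s" using bd Best_cong[of ?s sd] f rd P_tnext[OF kt] by simp
            ultimately show "IT k ?s \<and> nat (int T - ir ?s 9) < nat (int T - ir s 9)"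
              unfolding IT_def using f kt rd lt ev t_def unfolding ktok_def by auto
          qed (use lf_facts cost_facts in auto)
        qed
      qed
    qed
  qed
qed

lemma P_tstart: "P k (k + 1) 0 = P k 0 0" unfolding P_def C_def by auto
lemma P_kend: "P k (int T) 0 = P (k + 1) 0 0" unfolding P_def C_def by auto
lemma P_kskip: "\<not> (Cb - Cu - of_int k * V > 0) \<Longrightarrow> P k 0 0 = P (k + 1) 0 0" unfolding P_def C_def by auto

abbreviation "TBc \<equiv> 3 + (31 * (T + 1) + (10 + (61 * (T + 1) + 2)))"

lemma tloop: "env s \<Longrightarrow> im s = (\<lambda>_. 0) \<Longrightarrow> ir s 8 = k \<Longrightarrow> 1 \<le> k \<Longrightarrow> k \<le> int T - 1 \<Longrightarrow>
  Cb - Cu - of_int k * V > 0 \<Longrightarrow> Best (P k 0 0) s \<Longrightarrow>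
  runs TLOOP s (2 + (T + 1) * (TBc + 1)) (\<lambda>s'. env s' \<and> im s' = (\<lambda>_. 0) \<and> ir s' 8 = k \<and> Best (P (k + 1) 0 0) s')"
  unfolding TLOOP_def
proof (rule runs_SeqI)
  assume e: "env s" and imz: "im s = (\<lambda>_. 0)" and r8: "ir s 8 = k" and k: "1 \<le> k" "k \<le> int T - 1"
    and c: "Cb - Cu - of_int k * V > 0" and b: "Best (P k 0 0) s"
  let ?s = "lfrun (seqi [IConst 14 1, IAdd 9 8 14]) s"
  have f: "ir ?s 9 = k + 1" "rm ?s = rm s"
    "\<And>r. r \<noteq> 9 \<Longrightarrow> r \<noteq> 14 \<Longrightarrow> ir ?s r = ir s r" "rr ?s = rr s" "im ?s = im s"
    using r8 by (auto simp: seqi_def)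
  have "env ?s" using e f unfolding env_def by auto
  moreover have "Best (P k (k + 1) 0) ?s" using b Best_cong[of ?s s] f P_tstart by simp
  ultimately show "runs (seqi [IConst 14 1, IAdd 9 8 14]) s 2 (IT k)"
    using f imz r8 k c by (intro runs_lf) (auto simp: seqi_def IT_def)
next
  fix sa assume sa: "IT k sa"
  show "runs (While (ILess 9 3) TBODY) sa ((T + 1) * (TBc + 1))
    (\<lambda>s'. env s' \<and> im s' = (\<lambda>_. 0) \<and> ir s' 8 = k \<and> Best (P (k + 1) 0 0) s')"
  proof (rule runs_While[where f = "\<lambda>s. nat (int T - ir s 9)" and N = T and cb = TBc and I = "IT k"])
    fix s assume "IT k s" "holds (ILess 9 3) s"
    then show "runs TBODY s TBc (\<lambda>s'. IT k s' \<and> nat (int T - ir s' 9) < nat (int T - ir s 9))"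
      using tbody by simp
  next
    show "IT k sa" by (rule sa)
  next
    show "nat (int T - ir sa 9) \<le> T" using sa unfolding IT_def by auto
  next
    fix s assume "IT k s" "\<not> holds (ILess 9 3) s"
    then show "env s \<and> im s = (\<lambda>_. 0) \<and> ir s 8 = k \<and> Best (P (k + 1) 0 0) s"
      unfolding IT_def env_def using P_kend by auto
  qed auto
qed

definition IK :: "state \<Rightarrow> bool" where
  "IK s \<longleftrightarrow> env s \<and> im s = (\<lambda>_. 0) \<and> 1 \<le> ir s 8 \<and> ir s 8 \<le> int T \<and> Best (P (ir s 8) 0 0) s"

abbreviation "KBc \<equiv> 3 + ((2 + (T + 1) * (TBc + 1) + 1) + 2)"

lemma kbody: "IK s \<Longrightarrow> ir s 8 < ir s 3 \<Longrightarrow>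
   runs KBODY s KBc (\<lambda>s'. IK s' \<and> nat (int T - ir s' 8) < nat (int T - ir s 8))"
proof -
  assume ik: "IK s" and lt: "ir s 8 < ir s 3"
  define k where "k = ir s 8"
  have e: "env s" and imz: "im s = (\<lambda>_. 0)" and b: "Best (P k 0 0) s" and k1: "1 \<le> k"
    using ik unfolding IK_def k_def by auto
  have ev: "ir s 3 = int T" "rr s 0 = Cb" "rr s 1 = Cu" "rr s 2 = V"
    using e unfolding env_def by auto
  have kT: "k \<le> int T - 1" using lt ev k_def by simp
  show ?thesis unfolding KBODY_def
  proof (rule runs_SeqI)
    let ?s = "lfrun (seqi [OfInt 7 8, RMul 7 7 2, RAdd 7 7 1]) s"
    have f: "rr ?s 7 = of_int k * V + Cu" "rm ?s = rm s" "ir ?s = ir s" "\<And>r. r \<noteq> 7 \<Longrightarrow> rr ?s r = rr s r"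
      "im ?s = im s"
      using ev k_def by (auto simp: seqi_def)
    have "env ?s" using e f unfolding env_def by auto
    moreover have "Best (P k 0 0) ?s" using b Best_cong[of ?s s] f by simp
    ultimately show "runs (seqi [OfInt 7 8, RMul 7 7 2, RAdd 7 7 1]) s 3
      (\<lambda>s'. env s' \<and> im s' = (\<lambda>_. 0) \<and> ir s' 8 = k \<and> rr s' 7 = of_int k * V + Cu \<and> Best (P k 0 0) s')"
      using f imz k_def by (intro runs_lf) (auto simp: seqi_def)
  next
    fix sa assume sa: "env sa \<and> im sa = (\<lambda>_. 0) \<and> ir sa 8 = k \<and> rr sa 7 = of_int k * V + Cu \<and> Best (P k 0 0) sa"
    show "runs (Seq (If (RLess 7 0) TLOOP Skip) (seqi [IConst 14 1, IAdd 8 8 14])) sa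
        ((2 + (T + 1) * (TBc + 1) + 1) + 2) (\<lambda>s'. IK s' \<and> nat (int T - ir s' 8) < nat (int T - ir s 8))"
    proof (rule runs_SeqI)
      show "runs (If (RLess 7 0) TLOOP Skip) sa (2 + (T + 1) * (TBc + 1) + 1)
        (\<lambda>s'. env s' \<and> im s' = (\<lambda>_. 0) \<and> ir s' 8 = k \<and> Best (P (k + 1) 0 0) s')"
      proof (rule runs_If[where b = "2 + (T + 1) * (TBc + 1)"])
        assume "holds (RLess 7 0) sa"
        then have "Cb - Cu - of_int k * V > 0" using sa unfolding env_def by auto
        then show "runs TLOOP sa (2 + (T + 1) * (TBc + 1))
          (\<lambda>s'. env s' \<and> im s' = (\<lambda>_. 0) \<and> ir s' 8 = k \<and> Best (P (k + 1) 0 0) s')"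
          using tloop sa k1 kT by blast
      next
        assume "\<not> holds (RLess 7 0) sa"
        then have "\<not> Cb - Cu - of_int k * V > 0" using sa unfolding env_def by auto
        then show "runs Skip sa (2 + (T + 1) * (TBc + 1))
          (\<lambda>s'. env s' \<and> im s' = (\<lambda>_. 0) \<and> ir s' 8 = k \<and> Best (P (k + 1) 0 0) s')"
          using sa P_kskip by (intro runs_Skip) auto
      qed simp
    next
      fix sb assume sb: "env sb \<and> im sb = (\<lambda>_. 0) \<and> ir sb 8 = k \<and> Best (P (k + 1) 0 0) sb"
      let ?s = "lfrun (seqi [IConst 14 1, IAdd 8 8 14]) sb"
      have f: "ir ?s 8 = k + 1" "rm ?s = rm sb"
        "\<And>r. r \<noteq> 8 \<Longrightarrow> r \<noteq> 14 \<Longrightarrow> ir ?s r = ir sb r" "rr ?s = rr sb" "im ?s = im sb"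
        using sb by (auto simp: seqi_def)
      have "env ?s" using sb f unfolding env_def by auto
      moreover have "Best (P (k + 1) 0 0) ?s" using sb Best_cong[of ?s sb] f by simp
      ultimately show "runs (seqi [IConst 14 1, IAdd 8 8 14]) sb 2
         (\<lambda>s'. IK s' \<and> nat (int T - ir s' 8) < nat (int T - ir s 8))"
        using f sb k1 kT k_def by (intro runs_lf) (auto simp: seqi_def IK_def)
    qed
  qed
qed

lemma kloop: "IK s \<Longrightarrow> runs KLOOP s ((T + 1) * (KBc + 1)) (\<lambda>s'. env s' \<and> im s' = (\<lambda>_. 0) \<and> Best C s')"
  unfolding KLOOP_def
proof (rule runs_While[where f = "\<lambda>s. nat (int T - ir s 8)" and N = T and cb = KBc and I = IK])
  fix s assume "IK s" "holds (ILess 8 3) s"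
  then show "runs KBODY s KBc (\<lambda>s'. IK s' \<and> nat (int T - ir s' 8) < nat (int T - ir s 8))"
    using kbody by simp
next
  assume "IK s" then show "nat (int T - ir s 8) \<le> T" unfolding IK_def by auto
next
  fix s assume "IK s" "\<not> holds (ILess 8 3) s"
  moreover have "P (int T) 0 0 = C" unfolding P_def C_def by auto
  ultimately show "env s \<and> im s = (\<lambda>_. 0) \<and> Best C s"
    unfolding IK_def env_def by auto
qed auto

end



context alg
begin

definition Sopt :: "int \<Rightarrow> int \<Rightarrow> int \<Rightarrow> int set" where
  "Sopt k m t = {a \<in> {0..min (k - 1) (int L - m - 2)}. Y (t - a - 1) < Y (t - a)}"

lemma Fam1: "Fam 1 T L Cb Cu V = {(k, m, S, t). (k, m, t) \<in> C \<and> S \<subseteq> {0..min (k - 1) (int L - m - 2)}}"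
  unfolding Fam_def C_def by auto

lemma Viol1: "Viol 1 Cu V Vb X Y (k, m, S, t) = X t - X (t - k)
     - ((Cu + of_int (k - m) * V - Vb) * Y (t + m + 1) + V * Q m t + Vb * Y t - Cu * Y (t - k))
     + (\<Sum>s\<in>S. w k s * (Y (t - s) - Y (t - s - 1)))"
  unfolding Viol_def Q_def w_def by simp

lemma Viol_le: "(k, m, t) \<in> C \<Longrightarrow> S \<subseteq> {0..min (k - 1) (int L - m - 2)} \<Longrightarrow>
   Viol 1 Cu V Vb X Y (k, m, S, t) \<le> F (k, m, t)"
proof -
  assume S: "S \<subseteq> {0..min (k - 1) (int L - m - 2)}"
  have "(\<Sum>s\<in>S. w k s * (Y (t - s) - Y (t - s - 1))) \<le> (\<Sum>s\<in>S. w k s * max 0 (Y (t - s) - Y (t - s - 1)))"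
  proof (rule sum_mono)
    fix s assume "s \<in> S"
    then have "0 < w k s" using S w_pos by force
    then show "w k s * (Y (t - s) - Y (t - s - 1)) \<le> w k s * max 0 (Y (t - s) - Y (t - s - 1))"
      by (intro mult_left_mono) auto
  qed
  also have "\<dots> \<le> G k t (min (k - 1) (int L - m - 2))"
    unfolding G_def
  proof (rule sum_mono2)
    fix s assume "s \<in> {0..min (k - 1) (int L - m - 2)} - S"
    then have "0 < w k s" using w_pos by force
    then show "0 \<le> w k s * max 0 (Y (t - s) - Y (t - s - 1))" by simp
  qed (use S in auto)
  finally show ?thesis unfolding Viol1 F_def by simp
qed

lemma Viol_eq: "Viol 1 Cu V Vb X Y (k, m, Sopt k m t, t) = F (k, m, t)"
proof -
  have "(\<Sum>s\<in>Sopt k m t. w k s * (Y (t - s) - Y (t - s - 1))) = G k t (min (k - 1) (int L - m - 2))"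
    unfolding Sopt_def G_def
    by (subst sum.inter_filter) (auto intro!: sum.cong simp: max_def)
  then show ?thesis unfolding Viol1 F_def by simp
qed


definition IS :: "(int \<Rightarrow> real) \<Rightarrow> state \<Rightarrow> bool" where
  "IS R s \<longleftrightarrow> env s \<and> Best C s \<and> ir s 12 = min (ir s 0 - 1) (int L - ir s 1 - 2) + 1 \<and> ir s 18 = 1 \<and>
     0 \<le> ir s 11 \<and> (ir s 11 \<le> ir s 12 \<or> ir s 11 = 0) \<and> rm s = R \<and>
     im s = (\<lambda>a. if 0 \<le> a \<and> a < ir s 11 \<and> R (byy + dx * (ir s 2 - a - 1)) < R (byy + dx * (ir s 2 - a)) then 1 else 0)"

lemma Best_C_bound: "Best C s \<Longrightarrow> ir s 0 \<le> int T"
  unfolding Best_def C_def by auto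

lemma sbody: "IS R s \<Longrightarrow> ir s 11 < ir s 12 \<Longrightarrow>
   runs SBODY s 20 (\<lambda>s'. IS R s' \<and> nat (ir s' 12 - ir s' 11) < nat (ir s 12 - ir s 11))"
proof -
  assume isr: "IS R s" and lt: "ir s 11 < ir s 12"
  let ?s = "lfrun SBODY s"
  have e: "env s" and rmR: "rm s = R" and r18: "ir s 18 = 1"
    and imd: "im s = (\<lambda>a. if 0 \<le> a \<and> a < ir s 11 \<and> R (byy + dx * (ir s 2 - a - 1)) < R (byy + dx * (ir s 2 - a)) then 1 else 0)"
    using isr unfolding IS_def by auto
  have ev: "ir s 6 = byy" "ir s 7 = dx" using e unfolding env_def by auto
  have f: "ir ?s 11 = ir s 11 + 1" "rm ?s = rm s" "rr ?s 0 = rr s 0" "rr ?s 1 = rr s 1" "rr ?s 2 = rr s 2"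
    "rr ?s 3 = rr s 3" "rr ?s 4 = rr s 4" "rr ?s 5 = rr s 5"
    "\<And>r. r \<in> {0,1,2,3,4,5,6,7,12,18,20} \<Longrightarrow> ir ?s r = ir s r"
    by (auto simp: SBODY_def seqi_def)
  have fim: "im ?s = (\<lambda>a. if a = ir s 11 \<and> R (byy + dx * (ir s 2 - ir s 11 - 1)) < R (byy + dx * (ir s 2 - ir s 11))
      then 1 else im s a)"
    using ev rmR r18 by (auto simp: SBODY_def seqi_def)
  have "env ?s" using e f unfolding env_def by simp
  moreover have "Best C ?s" using isr Best_cong[of ?s s] f unfolding IS_def by simp
  moreover have "im ?s = (\<lambda>a. if 0 \<le> a \<and> a < ir ?s 11 \<and> R (byy + dx * (ir ?s 2 - a - 1)) < R (byy + dx * (ir ?s 2 - a)) then 1 else 0)"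
    unfolding fim imd using f isr unfolding IS_def by (auto simp: fun_eq_iff)
  ultimately have "IS R ?s" using isr f lt rmR unfolding IS_def by auto
  then show ?thesis using f lt by (intro runs_lf) (use lf_facts cost_facts in auto)
qed

lemma sloop: "IS R s \<Longrightarrow> ir s 11 = 0 \<Longrightarrow> runs SLOOP s (21 * (T + 1)) (\<lambda>s'. IS R s' \<and> \<not> ir s' 11 < ir s' 12)"
  unfolding SLOOP_def
proof (rule runs_While[where f = "\<lambda>s. nat (ir s 12 - ir s 11)" and N = T and cb = 20])
  fix s assume "IS R s" "holds (ILess 11 12) s"
  then show "runs SBODY s 20 (\<lambda>s'. IS R s' \<and> nat (ir s' 12 - ir s' 11) < nat (ir s 12 - ir s 11))"
    using sbody by simp
next
  assume "IS R s" "ir s 11 = 0"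
  then show "nat (ir s 12 - ir s 11) \<le> T" using Best_C_bound[of s] unfolding IS_def by auto
next
  fix s assume "IS R s" "\<not> holds (ILess 11 12) s"
  then show "IS R s \<and> \<not> ir s 11 < ir s 12" by auto
qed (auto)

lemma sinit: "env s \<Longrightarrow> Best C s \<Longrightarrow> im s = (\<lambda>_. 0) \<Longrightarrow> runs SINIT s 20 (\<lambda>s'. IS (rm s) s' \<and> ir s' 11 = 0)"
proof (rule runs_lf)
  assume e: "env s" and b: "Best C s" and imz: "im s = (\<lambda>_. 0)"
  let ?s = "lfrun SINIT s"
  have ev: "ir s 4 = int L" "ir s 20 = 0" using e unfolding env_def by auto
  have f: "ir ?s 11 = 0" "ir ?s 18 = 1" "ir ?s 12 = min (ir s 0 - 1) (int L - ir s 1 - 2) + 1"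
    "rm ?s = rm s" "im ?s = (\<lambda>_. 0)" "rr ?s = rr s"
    "\<And>r. r \<in> {0,1,2,3,4,5,6,7,20} \<Longrightarrow> ir ?s r = ir s r"
    using ev imz by (auto simp: SINIT_def seqi_def)
  have "env ?s" using e f unfolding env_def by simp
  moreover have "Best C ?s" using b Best_cong[of ?s s] f by simp
  ultimately show "IS (rm s) ?s \<and> ir ?s 11 = 0" unfolding IS_def using f by (auto simp: fun_eq_iff)
qed (use lf_facts cost_facts in auto)


lemma post_ok:
  assumes isr: "IS R s" and ex: "\<not> ir s 11 < ir s 12" and pos: "\<exists>p\<in>C. 0 < F p"
  shows "(ir s 0, ir s 1, ir s 2) \<in> C \<and> (\<forall>p\<in>C. F p \<le> F (ir s 0, ir s 1, ir s 2)) \<and>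
     {a. im s a \<noteq> 0} = Sopt (ir s 0) (ir s 1) (ir s 2)"
proof -
  have e: "env s" and b: "Best C s" and rmR: "rm s = R"
    and r12: "ir s 12 = min (ir s 0 - 1) (int L - ir s 1 - 2) + 1" and r11: "0 \<le> ir s 11" "ir s 11 \<le> ir s 12 \<or> ir s 11 = 0"
    and imd: "im s = (\<lambda>a. if 0 \<le> a \<and> a < ir s 11 \<and> R (byy + dx * (ir s 2 - a - 1)) < R (byy + dx * (ir s 2 - a)) then 1 else 0)"
    using isr unfolding IS_def by auto
  obtain p where p: "p \<in> C" "0 < F p" using pos by auto
  have "0 < rr s 4" using b p unfolding Best_def by force
  then have bc: "(ir s 0, ir s 1, ir s 2) \<in> C" and bf: "F (ir s 0, ir s 1, ir s 2) = rr s 4"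
    and ball: "\<forall>p\<in>C. F p \<le> rr s 4" using b unfolding Best_def by auto
  define k where "k = ir s 0"
  define m where "m = ir s 1"
  define t where "t = ir s 2"
  have kmt: "1 \<le> k" "k \<le> int T - 1" "0 \<le> m" "m \<le> k - 1" "k + 1 \<le> t" "t \<le> int T - m - 1"
    using bc unfolding C_def k_def m_def t_def by auto
  have rng: "\<And>a. 0 \<le> a \<Longrightarrow> (a < ir s 11) = (a \<le> min (k - 1) (int L - m - 2))"
    using r12 r11 ex unfolding k_def m_def by auto
  have "{a. im s a \<noteq> 0} = Sopt k m t"
  proof -
    have "\<And>a. 0 \<le> a \<Longrightarrow> a \<le> min (k - 1) (int L - m - 2) \<Longrightarrow>
        R (byy + dx * (t - a - 1)) = Y (t - a - 1) \<and> R (byy + dx * (t - a)) = Y (t - a)"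
      using Yrd[OF e] rmR kmt by auto
    then show ?thesis unfolding imd Sopt_def using rng unfolding t_def by auto
  qed
  then show ?thesis using bc bf ball unfolding k_def m_def t_def by auto
qed

definition MPost :: "state \<Rightarrow> bool" where
  "MPost s' \<longleftrightarrow> ir s' 5 = bx \<and> ir s' 7 = dx \<and> ((\<exists>p\<in>C. 0 < F p) \<longrightarrow>
     (ir s' 0, ir s' 1, ir s' 2) \<in> C \<and> (\<forall>p\<in>C. F p \<le> F (ir s' 0, ir s' 1, ir s' 2)) \<and>
     {a. im s' a \<noteq> 0} = Sopt (ir s' 0) (ir s' 1) (ir s' 2))"

abbreviation "MAINc \<equiv> 1 + ((T + 1) * (KBc + 1) + (20 + 21 * (T + 1)))"

lemma main:
  assumes e: "env s" and imz: "im s = (\<lambda>_. 0)" and z: "ir s 0 = 0" "ir s 1 = 0" "ir s 2 = 0" "rr s 4 = 0"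
  shows "runs MAIN s MAINc MPost"
  unfolding MAIN_def
proof (rule runs_SeqI)
  let ?s = "lfrun (seqi [IConst 8 1]) s"
  have f: "ir ?s 8 = 1" "rm ?s = rm s" "\<And>r. r \<noteq> 8 \<Longrightarrow> ir ?s r = ir s r" "rr ?s = rr s" "im ?s = im s"
    by (auto simp: seqi_def)
  have "env ?s" using e f unfolding env_def by simp
  moreover have "Best (P 1 0 0) ?s" using f z unfolding Best_def P_def C_def by auto
  ultimately show "runs (seqi [IConst 8 1]) s 1 IK"
    using f imz T_pos by (intro runs_lf) (auto simp: seqi_def IK_def)
next
  fix sa assume sa: "IK sa"
  show "runs (Seq KLOOP (Seq SINIT SLOOP)) sa ((T + 1) * (KBc + 1) + (20 + 21 * (T + 1))) MPost"
  proof (rule runs_SeqI[OF kloop[OF sa]])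
    fix sb assume sb: "env sb \<and> im sb = (\<lambda>_. 0) \<and> Best C sb"
    show "runs (Seq SINIT SLOOP) sb (20 + 21 * (T + 1)) MPost"
    proof (rule runs_SeqI[OF sinit])
      fix sc assume sc: "IS (rm sb) sc \<and> ir sc 11 = 0"
      show "runs SLOOP sc (21 * (T + 1)) MPost"
      proof (rule runs_mono[OF sloop])
        fix sd assume sd: "IS (rm sb) sd \<and> \<not> ir sd 11 < ir sd 12"
        then have "env sd" unfolding IS_def by auto
        then have "ir sd 5 = bx" "ir sd 7 = dx" unfolding env_def by auto
        then show "MPost sd"
          using post_ok[of "rm sb" sd] sd unfolding MPost_def by blast
      qed (use sc in auto)
    qed (use sb in auto)
  qed
qed


end




context alg
begin

lemma cost_ok: "10 + (MAINc + 2) \<le> 2000 * T ^ 3"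
proof -
  have h: "1 \<le> T" using T_pos by simp
  have a: "T \<le> T * T" using h by simp
  have b: "T * T \<le> T * T * T" using h by simp
  have "10 + (MAINc + 2) = 92 * (T*T*T) + 292 * (T*T) + 338 * T + 171"
    by (simp add: algebra_simps)
  then show ?thesis using a b h unfolding power3_eq_cube by linarith
qed

lemma final_ok:
  assumes mp: "MPost s" and ex: "\<exists>idx\<in>Fam 1 T L Cb Cu V. Viol 1 Cu V Vb X Y idx > 0"
  shows "(ir s 0, ir s 1, {a. im s a \<noteq> 0}, ir s 2) \<in> Fam 1 T L Cb Cu V \<and>
    (\<forall>idx\<in>Fam 1 T L Cb Cu V. Viol 1 Cu V Vb X Y idx \<le> Viol 1 Cu V Vb X Y (ir s 0, ir s 1, {a. im s a \<noteq> 0}, ir s 2))"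
proof -
  obtain k m S t where i: "(k, m, S, t) \<in> Fam 1 T L Cb Cu V" "Viol 1 Cu V Vb X Y (k, m, S, t) > 0"
    using ex by auto
  then have kc: "(k, m, t) \<in> C" "S \<subseteq> {0..min (k - 1) (int L - m - 2)}" unfolding Fam1 by auto
  have "Viol 1 Cu V Vb X Y (k, m, S, t) \<le> F (k, m, t)" by (rule Viol_le[OF kc])
  then have "0 < F (k, m, t)" using i(2) by linarith
  then have "\<exists>p\<in>C. 0 < F p" using \<open>(k, m, t) \<in> C\<close> by blast
  then have b: "(ir s 0, ir s 1, ir s 2) \<in> C" "\<forall>p\<in>C. F p \<le> F (ir s 0, ir s 1, ir s 2)"
    "{a. im s a \<noteq> 0} = Sopt (ir s 0) (ir s 1) (ir s 2)"
    using mp unfolding MPost_def by auto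
  have "(ir s 0, ir s 1, {a. im s a \<noteq> 0}, ir s 2) \<in> Fam 1 T L Cb Cu V"
    unfolding Fam1 using b by (auto simp: Sopt_def)
  moreover have "\<forall>idx\<in>Fam 1 T L Cb Cu V. Viol 1 Cu V Vb X Y idx \<le> Viol 1 Cu V Vb X Y (ir s 0, ir s 1, {a. im s a \<noteq> 0}, ir s 2)"
  proof
    fix idx assume "idx \<in> Fam 1 T L Cb Cu V"
    then obtain k m S t where idx: "idx = (k, m, S, t)" "(k, m, t) \<in> C" "S \<subseteq> {0..min (k - 1) (int L - m - 2)}"
      unfolding Fam1 by auto
    have "Viol 1 Cu V Vb X Y idx \<le> F (k, m, t)" using Viol_le idx by simp
    also have "\<dots> \<le> F (ir s 0, ir s 1, ir s 2)" using b idx by auto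
    also have "\<dots> = Viol 1 Cu V Vb X Y (ir s 0, ir s 1, {a. im s a \<noteq> 0}, ir s 2)" using Viol_eq b by simp
    finally show "Viol 1 Cu V Vb X Y idx \<le> Viol 1 Cu V Vb X Y (ir s 0, ir s 1, {a. im s a \<noteq> 0}, ir s 2)" .
  qed
  ultimately show ?thesis by blast
qed

lemma whole:
  assumes e: "env s" and imz: "im s = (\<lambda>_. 0)" and z: "ir s 0 = 0" "ir s 1 = 0" "ir s 2 = 0" "rr s 4 = 0"
  shows "runs (Seq MAIN FINAL) s (MAINc + 2) (\<lambda>s'. \<exists>s1. MPost s1 \<and> ir s' 0 = ir s1 0 \<and> ir s' 1 = ir s1 1
     \<and> im s' = im s1 \<and> ir s' 2 = bx + dx * ir s1 2)"
proof (rule runs_SeqI[OF main[OF assms]])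
  fix s1 assume mp: "MPost s1"
  show "runs FINAL s1 2 (\<lambda>s'. \<exists>s1. MPost s1 \<and> ir s' 0 = ir s1 0 \<and> ir s' 1 = ir s1 1
     \<and> im s' = im s1 \<and> ir s' 2 = bx + dx * ir s1 2)"
  proof (rule runs_lf)
    have "ir s1 5 = bx" "ir s1 7 = dx" using mp unfolding MPost_def by auto
    then show "\<exists>s2. MPost s2 \<and> ir (lfrun FINAL s1) 0 = ir s2 0 \<and> ir (lfrun FINAL s1) 1 = ir s2 1
     \<and> im (lfrun FINAL s1) = im s2 \<and> ir (lfrun FINAL s1) 2 = bx + dx * ir s2 2"
      using mp by (intro exI[of _ s1]) (auto simp: FINAL_def seqi_def)
  qed (use lf_facts cost_facts in auto)
qed

end

lemma Fam2: "((k, m, S, t) \<in> Fam 2 T L Cb Cu V) = ((k, m, S, int T + 1 - t) \<in> Fam 1 T L Cb Cu V)"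
  unfolding Fam_def by auto

lemma Viol21: "Viol 2 Cu V Vb x y (k, m, S, t) =
   Viol 1 Cu V Vb (\<lambda>u. x (int T + 1 - u)) (\<lambda>u. y (int T + 1 - u)) (k, m, S, int T + 1 - t)"
proof -
  have a: "\<And>a. int T + 1 - (int T + 1 - t + a) = t - a" "\<And>a. int T + 1 - (int T + 1 - t - a) = t + a"
    "int T + 1 - (int T + 1 - t) = t" "\<And>a. int T + 1 - (int T + 1 - t - a - 1) = t + a + 1"
    "int T + 1 - (int T + 1 - t + m + 1) = t - m - 1"
    by simp_all
  have c: "((2::nat) = 1) = False" "((1::nat) = 1) = True" by simp_all
  show ?thesis unfolding Viol_def by (simp only: prod.case c if_True if_False a)
qed




lemma case1:
  fixes T L :: nat and Cb Cu V Vb :: real and x y :: "int \<Rightarrow> real"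
  assumes "0 < T" "0 < L" "Cb > Cu" "Cu > 0" "V > 0" "Vb + V \<le> Cb" "Cu < Vb" "Vb < Cu + V"
  shows "\<exists>n s'. exec (PROG 1) (init_state T L Cb Cu V Vb x y) n s'
          \<and> n \<le> 2000 * T ^ 3
          \<and> ((\<exists>idx\<in>Fam 1 T L Cb Cu V. Viol 1 Cu V Vb x y idx > 0) \<longrightarrow>
               output_index s' \<in> Fam 1 T L Cb Cu V
               \<and> (\<forall>idx\<in>Fam 1 T L Cb Cu V.
                     Viol 1 Cu V Vb x y idx \<le> Viol 1 Cu V Vb x y (output_index s')))"
proof -
  define s0 where "s0 = init_state T L Cb Cu V Vb x y"
  interpret A: alg T L Cb Cu V Vb 0 "int T" 1 "rm s0" x y
  proof
    fix u assume "1 \<le> u" "u \<le> int T"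
    then show "rm s0 (0 + 1 * u) = x u \<and> rm s0 (int T + 1 * u) = y u \<and> 0 < 0 + 1 * u \<and> 0 < int T + 1 * u"
      unfolding s0_def init_state_def by auto
  qed (use assms in auto)
  define s1 where "s1 = lfrun (SETUP 1) s0"
  have f: "A.env s1" "im s1 = (\<lambda>_. 0)" "ir s1 0 = 0" "ir s1 1 = 0" "ir s1 2 = 0" "rr s1 4 = 0"
    unfolding s1_def A.env_def by (auto simp: SETUP_def seqi_def s0_def init_state_def)
  have "runs (PROG 1) s0 (10 + (A.MAINc + 2)) (\<lambda>s'. \<exists>s1. A.MPost s1 \<and> ir s' 0 = ir s1 0 \<and> ir s' 1 = ir s1 1
     \<and> im s' = im s1 \<and> ir s' 2 = 0 + 1 * ir s1 2)"
    unfolding PROG_def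
  proof (rule runs_SeqI)
    show "runs (SETUP 1) s0 10 (\<lambda>s. s = s1)" unfolding s1_def
      by (rule runs_lf) (use lf_facts cost_facts in auto)
  next
    fix s assume "s = s1"
    then show "runs (Seq MAIN FINAL) s (A.MAINc + 2) (\<lambda>s'. \<exists>s1. A.MPost s1 \<and> ir s' 0 = ir s1 0 \<and> ir s' 1 = ir s1 1
     \<and> im s' = im s1 \<and> ir s' 2 = 0 + 1 * ir s1 2)" using A.whole[OF f] by simp
  qed
  then obtain n s' s2 where r: "exec (PROG 1) s0 n s'" "n \<le> 10 + (A.MAINc + 2)" "A.MPost s2"
    "ir s' 0 = ir s2 0" "ir s' 1 = ir s2 1" "im s' = im s2" "ir s' 2 = ir s2 2"
    unfolding runs_def by auto
  have o: "output_index s' = (ir s2 0, ir s2 1, {a. im s2 a \<noteq> 0}, ir s2 2)"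
    unfolding output_index_def using r by simp
  have c: "n \<le> 2000 * T ^ 3" using r(2) A.cost_ok by linarith
  have p: "(\<exists>idx\<in>Fam 1 T L Cb Cu V. Viol 1 Cu V Vb x y idx > 0) \<longrightarrow>
               output_index s' \<in> Fam 1 T L Cb Cu V
               \<and> (\<forall>idx\<in>Fam 1 T L Cb Cu V.
                     Viol 1 Cu V Vb x y idx \<le> Viol 1 Cu V Vb x y (output_index s'))"
    unfolding o using A.final_ok[OF r(3)] by blast
  show ?thesis using r(1) c p unfolding s0_def by blast
qed


lemma case2:
  fixes T L :: nat and Cb Cu V Vb :: real and x y :: "int \<Rightarrow> real"
  assumes "0 < T" "0 < L" "Cb > Cu" "Cu > 0" "V > 0" "Vb + V \<le> Cb" "Cu < Vb" "Vb < Cu + V"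
  shows "\<exists>n s'. exec (PROG 2) (init_state T L Cb Cu V Vb x y) n s'
          \<and> n \<le> 2000 * T ^ 3
          \<and> ((\<exists>idx\<in>Fam 2 T L Cb Cu V. Viol 2 Cu V Vb x y idx > 0) \<longrightarrow>
               output_index s' \<in> Fam 2 T L Cb Cu V
               \<and> (\<forall>idx\<in>Fam 2 T L Cb Cu V.
                     Viol 2 Cu V Vb x y idx \<le> Viol 2 Cu V Vb x y (output_index s')))"
proof -
  define s0 where "s0 = init_state T L Cb Cu V Vb x y"
  define X where "X = (\<lambda>u. x (int T + 1 - u))"
  define Y where "Y = (\<lambda>u. y (int T + 1 - u))"
  interpret A: alg T L Cb Cu V Vb "int T + 1" "2 * int T + 1" "-1" "rm s0" X Y
  proof
    fix u assume "1 \<le> u" "u \<le> int T"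
    then show "rm s0 (int T + 1 + - 1 * u) = X u \<and> rm s0 (2 * int T + 1 + - 1 * u) = Y u \<and>
       0 < int T + 1 + - 1 * u \<and> 0 < 2 * int T + 1 + - 1 * u"
      unfolding s0_def init_state_def X_def Y_def by (auto simp: algebra_simps)
  qed (use assms in auto)
  define s1 where "s1 = lfrun (SETUP 2) s0"
  have f: "A.env s1" "im s1 = (\<lambda>_. 0)" "ir s1 0 = 0" "ir s1 1 = 0" "ir s1 2 = 0" "rr s1 4 = 0"
    unfolding s1_def A.env_def by (auto simp: SETUP_def seqi_def s0_def init_state_def)
  have "runs (PROG 2) s0 (10 + (A.MAINc + 2)) (\<lambda>s'. \<exists>s1. A.MPost s1 \<and> ir s' 0 = ir s1 0 \<and> ir s' 1 = ir s1 1
     \<and> im s' = im s1 \<and> ir s' 2 = (int T + 1) + - 1 * ir s1 2)"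
    unfolding PROG_def
  proof (rule runs_SeqI)
    show "runs (SETUP 2) s0 10 (\<lambda>s. s = s1)" unfolding s1_def
      by (rule runs_lf) (use lf_facts cost_facts in auto)
  next
    fix s assume "s = s1"
    then show "runs (Seq MAIN FINAL) s (A.MAINc + 2) (\<lambda>s'. \<exists>s1. A.MPost s1 \<and> ir s' 0 = ir s1 0 \<and> ir s' 1 = ir s1 1
     \<and> im s' = im s1 \<and> ir s' 2 = (int T + 1) + - 1 * ir s1 2)" using A.whole[OF f] by simp
  qed
  then obtain n s' s2 where r: "exec (PROG 2) s0 n s'" "n \<le> 10 + (A.MAINc + 2)" "A.MPost s2"
    "ir s' 0 = ir s2 0" "ir s' 1 = ir s2 1" "im s' = im s2" "ir s' 2 = int T + 1 - ir s2 2"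
    unfolding runs_def by auto
  define S where "S = {a. im s2 a \<noteq> 0}"
  have o: "output_index s' = (ir s2 0, ir s2 1, S, int T + 1 - ir s2 2)"
    unfolding output_index_def S_def using r by simp
  have c: "n \<le> 2000 * T ^ 3" using r(2) A.cost_ok by linarith
  have tt: "int T + 1 - (int T + 1 - ir s2 2) = ir s2 2" by simp
  have vo: "Viol 2 Cu V Vb x y (output_index s') = Viol 1 Cu V Vb X Y (ir s2 0, ir s2 1, S, ir s2 2)"
    unfolding o Viol21[of Cu V Vb x y _ _ _ _ T] tt X_def Y_def ..
  have p: "(\<exists>idx\<in>Fam 2 T L Cb Cu V. Viol 2 Cu V Vb x y idx > 0) \<longrightarrow>
               output_index s' \<in> Fam 2 T L Cb Cu V
               \<and> (\<forall>idx\<in>Fam 2 T L Cb Cu V.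
                     Viol 2 Cu V Vb x y idx \<le> Viol 2 Cu V Vb x y (output_index s'))"
  proof
    assume "\<exists>idx\<in>Fam 2 T L Cb Cu V. Viol 2 Cu V Vb x y idx > 0"
    then obtain k m S' t where i: "(k, m, S', t) \<in> Fam 2 T L Cb Cu V" "Viol 2 Cu V Vb x y (k, m, S', t) > 0"
      by auto
    have "(k, m, S', int T + 1 - t) \<in> Fam 1 T L Cb Cu V" "Viol 1 Cu V Vb X Y (k, m, S', int T + 1 - t) > 0"
      using i Fam2 Viol21[of Cu V Vb x y k m S' t T] unfolding X_def Y_def by auto
    then have "\<exists>idx\<in>Fam 1 T L Cb Cu V. Viol 1 Cu V Vb X Y idx > 0" by blast
    from A.final_ok[OF r(3) this] have
      fo: "(ir s2 0, ir s2 1, S, ir s2 2) \<in> Fam 1 T L Cb Cu V"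
      "\<forall>idx\<in>Fam 1 T L Cb Cu V. Viol 1 Cu V Vb X Y idx \<le> Viol 1 Cu V Vb X Y (ir s2 0, ir s2 1, S, ir s2 2)"
      unfolding S_def by auto
    have "output_index s' \<in> Fam 2 T L Cb Cu V" unfolding o Fam2 tt by (rule fo(1))
    moreover have "\<forall>idx\<in>Fam 2 T L Cb Cu V. Viol 2 Cu V Vb x y idx \<le> Viol 2 Cu V Vb x y (output_index s')"
    proof
      fix idx assume "idx \<in> Fam 2 T L Cb Cu V"
      then obtain k m S' t where idx: "idx = (k, m, S', t)" "(k, m, S', t) \<in> Fam 2 T L Cb Cu V"
        by (cases idx) auto
      have "(k, m, S', int T + 1 - t) \<in> Fam 1 T L Cb Cu V" using idx Fam2 by auto
      then have "Viol 1 Cu V Vb X Y (k, m, S', int T + 1 - t) \<le> Viol 1 Cu V Vb X Y (ir s2 0, ir s2 1, S, ir s2 2)"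
        using fo(2) by blast
      then show "Viol 2 Cu V Vb x y idx \<le> Viol 2 Cu V Vb x y (output_index s')"
        unfolding vo idx Viol21[of Cu V Vb x y k m S' t T] X_def Y_def .
    qed
    ultimately show "output_index s' \<in> Fam 2 T L Cb Cu V
               \<and> (\<forall>idx\<in>Fam 2 T L Cb Cu V.
                     Viol 2 Cu V Vb x y idx \<le> Viol 2 Cu V Vb x y (output_index s'))" by blast
  qed
  show ?thesis using r(1) c p unfolding s0_def by blast
qed

theorem proposition12:
  assumes "j \<in> {1, 2 :: nat}"
  shows "\<exists>(p :: prog) (c :: nat).
    \<forall>(T :: nat) (L :: nat) (Cb :: real) (Cu :: real) (V :: real) (Vb :: real)
      (x :: int \<Rightarrow> real) (y :: int \<Rightarrow> real).
      0 < T \<longrightarrow> 0 < L \<longrightarrow> Cb > Cu \<longrightarrow> Cu > 0 \<longrightarrow> V > 0 \<longrightarrow> Vb + V \<le> Cb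
      \<longrightarrow> Cu < Vb \<longrightarrow> Vb < Cu + V
      \<longrightarrow> (\<forall>t\<in>{1..int T}. 0 \<le> x t \<and> 0 \<le> y t) \<longrightarrow>
      (\<exists>n s'. exec p (init_state T L Cb Cu V Vb x y) n s'
          \<and> n \<le> c * T ^ 3
          \<and> ((\<exists>idx\<in>Fam j T L Cb Cu V. Viol j Cu V Vb x y idx > 0) \<longrightarrow>
               output_index s' \<in> Fam j T L Cb Cu V
               \<and> (\<forall>idx\<in>Fam j T L Cb Cu V.
                     Viol j Cu V Vb x y idx \<le> Viol j Cu V Vb x y (output_index s'))))"
proof (cases "j = 1")
  case True
  show ?thesis unfolding True
    by (intro exI[of _ "PROG 1"] exI[of _ 2000] allI impI case1) auto
next
  case False
  then have "j = 2" using assms by auto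
  show ?thesis unfolding \<open>j = 2\<close>
    by (intro exI[of _ "PROG 2"] exI[of _ 2000] allI impI case2) auto
qed


end
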